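(* Let $N\geq 4$ and let $\Gamma$ be the graph obtained from the cycle graph $C_N$ by adding one edge (a chord) $\{n,m\}$ between two vertices that are not adjacent in $C_N$. Then $\mathcal C^N(\Gamma)=0$. (Consequently, under the entropy model $S(Q)=\alpha L(Q)-J(Q)\log\mathcal D$ the $N$-partite information of the whole collection vanishes, while each of the two cycles created by the chord, if it has at least $3$ vertices, is itself a cycle graph for which $\mathcal C=2(-1)^{p-1}$, $p$ its number of vertices.)
   Context: Let $\Gamma$ be a finite simple graph with vertex set $[N]$ (vertices model planar subsystems, edges model shared walls/handles, each cycle encloses a hole). For nonempty $Q\subseteq[N]$ let $\Gamma[Q]$ be the induced subgraph, $c(Q)$ its number of connected components, $e(Q)$ its number of edges, $b_1(Q)=e(Q)-|Q|+c(Q)$. Define $J(Q)=c(Q)+b_1(Q)$ (number of boundary components of the union of the subsystems in $Q$) and $\mathcal C^N(\Gamma)=\sum_{\emptyset\neq Q\subseteq[N]}(-1)^{|Q|-1}J(Q)$. $C_N$ has edges $\{i,i+1\bmod N\}$. *)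

theory Defs
  imports Main
begin

definition induced_adj :: "'a set set \<Rightarrow> 'a set \<Rightarrow> ('a \<times> 'a) set" where
  "induced_adj E Q = {(u, v). u \<in> Q \<and> v \<in> Q \<and> {u, v} \<in> E}"

definition comp_rel :: "'a set set \<Rightarrow> 'a set \<Rightarrow> ('a \<times> 'a) set" where
  "comp_rel E Q = Restr ((induced_adj E Q)\<^sup>*) Q"

definition n_comp :: "'a set set \<Rightarrow> 'a set \<Rightarrow> nat" where
  "n_comp E Q = card (Q // comp_rel E Q)"

definition n_edges :: "'a set set \<Rightarrow> 'a set \<Rightarrow> nat" where
  "n_edges E Q = card {e \<in> E. e \<subseteq> Q}"

definition betti1 :: "'a set set \<Rightarrow> 'a set \<Rightarrow> int" where
  "betti1 E Q = int (n_edges E Q) - int (card Q) + int (n_comp E Q)"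

definition Jb :: "'a set set \<Rightarrow> 'a set \<Rightarrow> int" where
  "Jb E Q = int (n_comp E Q) + betti1 E Q"

definition CN :: "'a set set \<Rightarrow> 'a set \<Rightarrow> int" where
  "CN E V = (\<Sum>Q \<in> Pow V - {{}}. (-1) ^ (card Q - 1) * Jb E Q)"

definition cycle_edges :: "nat \<Rightarrow> nat set set" where
  "cycle_edges N = {{i, (i + 1) mod N} | i. i < N}"

end

theory Submission
  imports Defs
begin

lemma adj_sym: "(x,y) \<in> induced_adj E Q \<Longrightarrow> (y,x) \<in> induced_adj E Q"
  by (auto simp: induced_adj_def insert_commute)

lemma adj_sub: "induced_adj E Q \<subseteq> Q \<times> Q"
  by (auto simp: induced_adj_def)

lemma rtr_sym: "(x,y) \<in> (induced_adj E Q)\<^sup>* \<Longrightarrow> (y,x) \<in> (induced_adj E Q)\<^sup>*"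
proof -
  have "sym (induced_adj E Q)" unfolding sym_def using adj_sym by (metis)
  then have "sym ((induced_adj E Q)\<^sup>*)" by (rule sym_rtrancl)
  then show "(x,y) \<in> (induced_adj E Q)\<^sup>* \<Longrightarrow> (y,x) \<in> (induced_adj E Q)\<^sup>*"
    unfolding sym_def by blast
qed

lemma comp_equiv: "equiv Q (comp_rel E Q)"
  unfolding equiv_def refl_on_def sym_def trans_def comp_rel_def
  by (auto intro: rtr_sym rtrancl_trans)

lemma adj_insert: "induced_adj (insert {a,b} E) Q =
   induced_adj E Q \<union> (if a \<in> Q \<and> b \<in> Q then {(a,b),(b,a)} else {})"
  by (auto simp: induced_adj_def doubleton_eq_iff)

lemma rtr_union:
  assumes sym: "\<And>x y. (x,y) \<in> r \<Longrightarrow> (y,x) \<in> r"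
  shows "(r \<union> {(a,b),(b,a)})\<^sup>* = {(x,y). (x,y) \<in> r\<^sup>* \<or> (x,a) \<in> r\<^sup>* \<and> (b,y) \<in> r\<^sup>*
          \<or> (x,b) \<in> r\<^sup>* \<and> (a,y) \<in> r\<^sup>*}" (is "?L = ?R")
proof
  have symr: "(x,y) \<in> r\<^sup>* \<Longrightarrow> (y,x) \<in> r\<^sup>*" for x y
  proof -
    have "sym r" unfolding sym_def using sym by metis
    then have "sym (r\<^sup>*)" by (rule sym_rtrancl)
    then show "(x,y) \<in> r\<^sup>* \<Longrightarrow> (y,x) \<in> r\<^sup>*" unfolding sym_def by blast
  qed
  show "?L \<subseteq> ?R"
  proof
    fix p assume "p \<in> ?L"
    then obtain x y where p: "p = (x,y)" and h: "(x,y) \<in> ?L" by (cases p) auto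
    from h have "(x,y) \<in> ?R"
    proof (induction rule: rtrancl_induct)
      case base then show ?case by auto
    next
      case (step y z)
      from step.hyps(2) consider "(y,z) \<in> r" | "y = a" "z = b" | "y = b" "z = a" by blast
      then show ?case
      proof cases
        case 1 with step.IH show ?thesis by (auto intro: rtrancl_into_rtrancl)
      next
        case 2 with step.IH show ?thesis by (auto intro: symr rtrancl_trans)
      next
        case 3 with step.IH show ?thesis by (auto intro: symr rtrancl_trans)
      qed
    qed
    then show "p \<in> ?R" using p by simp
  qed
next
  have sub: "r\<^sup>* \<subseteq> ?L" by (rule rtrancl_mono) blast
  have ab: "(a,b) \<in> ?L" "(b,a) \<in> ?L" by auto
  show "?R \<subseteq> ?L"
  proof clarify
    fix x y assume "(x,y) \<in> r\<^sup>* \<or> (x,a) \<in> r\<^sup>* \<and> (b,y) \<in> r\<^sup>* \<or> (x,b) \<in> r\<^sup>* \<and> (a,y) \<in> r\<^sup>*"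
    then show "(x,y) \<in> ?L" using sub ab by (meson rtrancl_trans subsetD)
  qed
qed

lemma comp_insert: "comp_rel (insert {a,b} E) Q =
  (if a \<in> Q \<and> b \<in> Q then comp_rel E Q \<union> {(x,y). (x,a) \<in> comp_rel E Q \<and> (b,y) \<in> comp_rel E Q
      \<or> (x,b) \<in> comp_rel E Q \<and> (a,y) \<in> comp_rel E Q} else comp_rel E Q)"
proof (cases "a \<in> Q \<and> b \<in> Q")
  case True
  have "comp_rel (insert {a,b} E) Q = Restr ((induced_adj E Q \<union> {(a,b),(b,a)})\<^sup>*) Q"
    unfolding comp_rel_def adj_insert using True by simp
  also have "\<dots> = Restr {(x,y). (x,y) \<in> (induced_adj E Q)\<^sup>* \<or> (x,a) \<in> (induced_adj E Q)\<^sup>* \<and> (b,y) \<in> (induced_adj E Q)\<^sup>*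
          \<or> (x,b) \<in> (induced_adj E Q)\<^sup>* \<and> (a,y) \<in> (induced_adj E Q)\<^sup>*} Q"
    by (subst rtr_union) (auto intro: adj_sym)
  finally show ?thesis using True unfolding comp_rel_def by auto
next
  case False
  then show ?thesis unfolding comp_rel_def adj_insert by auto
qed

lemma comp_sub: "comp_rel E Q \<subseteq> Q \<times> Q" by (auto simp: comp_rel_def)

lemma ncomp_insert:
  assumes fin: "finite Q"
  shows "int (n_comp (insert {a,b} E) Q) = int (n_comp E Q)
     - (if a \<in> Q \<and> b \<in> Q \<and> (a,b) \<notin> comp_rel E Q then 1 else 0)"
proof (cases "a \<in> Q \<and> b \<in> Q \<and> (a,b) \<notin> comp_rel E Q")
  case False
  let ?R = "comp_rel E Q"
  have eq: "comp_rel (insert {a,b} E) Q = ?R"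
  proof (cases "a \<in> Q \<and> b \<in> Q")
    case True
    with False have ab: "(a,b) \<in> ?R" by blast
    have eqv: "equiv Q ?R" by (rule comp_equiv)
    have ba: "(b,a) \<in> ?R" using ab eqv by (meson equiv_def symD)
    have "{(x,y). (x,a) \<in> ?R \<and> (b,y) \<in> ?R \<or> (x,b) \<in> ?R \<and> (a,y) \<in> ?R} \<subseteq> ?R"
      using ab ba eqv unfolding equiv_def trans_def by blast
    then show ?thesis using True by (subst comp_insert) auto
  next
    case False then show ?thesis by (subst comp_insert) auto
  qed
  show ?thesis unfolding n_comp_def eq using False by simp
next
  case True
  let ?R = "comp_rel E Q"
  let ?R' = "comp_rel (insert {a,b} E) Q"
  have eqv: "equiv Q ?R" by (rule comp_equiv)
  have R': "?R' = ?R \<union> {(x,y). (x,a) \<in> ?R \<and> (b,y) \<in> ?R \<or> (x,b) \<in> ?R \<and> (a,y) \<in> ?R}"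
    using True by (subst comp_insert) auto
  define Ca where "Ca = ?R `` {a}"
  define Cb where "Cb = ?R `` {b}"
  have symR: "(x,y) \<in> ?R \<Longrightarrow> (y,x) \<in> ?R" for x y using eqv by (meson equiv_def symD)
  have trR: "(x,y) \<in> ?R \<Longrightarrow> (y,z) \<in> ?R \<Longrightarrow> (x,z) \<in> ?R" for x y z
    using eqv by (meson equiv_def transD)
  have cls: "?R' `` {x} = (if x \<in> Ca \<union> Cb then Ca \<union> Cb else ?R `` {x})" if "x \<in> Q" for x
  proof -
    have "?R' `` {x} = {y. (x,y) \<in> ?R \<or> (x,a) \<in> ?R \<and> (b,y) \<in> ?R \<or> (x,b) \<in> ?R \<and> (a,y) \<in> ?R}"
      using R' by auto
    also have "\<dots> = (if x \<in> Ca \<union> Cb then Ca \<union> Cb else ?R `` {x})"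
    proof (cases "x \<in> Ca \<union> Cb")
      case xin: True
      have "(x,y) \<in> ?R \<or> (x,a) \<in> ?R \<and> (b,y) \<in> ?R \<or> (x,b) \<in> ?R \<and> (a,y) \<in> ?R
            \<longleftrightarrow> (a,y) \<in> ?R \<or> (b,y) \<in> ?R" for y
      proof -
        from xin have "(a,x) \<in> ?R \<or> (b,x) \<in> ?R" unfolding Ca_def Cb_def by auto
        then show ?thesis
        proof
          assume ax: "(a,x) \<in> ?R"
          have nxb: "(x,b) \<notin> ?R" using ax True trR by blast
          show ?thesis using ax nxb symR trR by blast
        next
          assume bx: "(b,x) \<in> ?R"
          have nxa: "(x,a) \<notin> ?R" using bx True trR symR by blast
          show ?thesis using bx nxa symR trR by blast
        qed
      qed
      then show ?thesis using xin unfolding Ca_def Cb_def by auto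
    next
      case xout: False
      then have "(x,a) \<notin> ?R" "(x,b) \<notin> ?R" unfolding Ca_def Cb_def using symR by auto
      then show ?thesis using xout by auto
    qed
    finally show ?thesis .
  qed
  have quot: "Q // ?R' = insert (Ca \<union> Cb) (Q // ?R - {Ca, Cb})"
  proof
    show "Q // ?R' \<subseteq> insert (Ca \<union> Cb) (Q // ?R - {Ca, Cb})"
    proof
      fix X assume "X \<in> Q // ?R'"
      then obtain x where x: "x \<in> Q" "X = ?R' `` {x}" by (auto elim: quotientE)
      show "X \<in> insert (Ca \<union> Cb) (Q // ?R - {Ca, Cb})"
      proof (cases "x \<in> Ca \<union> Cb")
        case True then show ?thesis using x cls by simp
      next
        case False
        have "?R `` {x} \<noteq> Ca" using False eqv x(1) unfolding Ca_def
          by (metis Image_singleton_iff UnI1 equiv_class_self)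
        moreover have "?R `` {x} \<noteq> Cb" using False eqv x(1) unfolding Cb_def
          by (metis Image_singleton_iff UnI2 equiv_class_self)
        ultimately show ?thesis using x cls False by (auto intro: quotientI)
      qed
    qed
  next
    show "insert (Ca \<union> Cb) (Q // ?R - {Ca, Cb}) \<subseteq> Q // ?R'"
    proof
      fix X assume X: "X \<in> insert (Ca \<union> Cb) (Q // ?R - {Ca, Cb})"
      show "X \<in> Q // ?R'"
      proof (cases "X = Ca \<union> Cb")
        case True
        have "a \<in> Ca" unfolding Ca_def using eqv \<open>a \<in> Q \<and> b \<in> Q \<and> _\<close> by (meson equiv_class_self)
        then have "?R' `` {a} = Ca \<union> Cb" using cls \<open>a \<in> Q \<and> b \<in> Q \<and> _\<close> by simp
        then show ?thesis using True \<open>a \<in> Q \<and> b \<in> Q \<and> _\<close> by (metis quotientI)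
      next
        case False
        with X have "X \<in> Q // ?R" "X \<noteq> Ca" "X \<noteq> Cb" by auto
        then obtain x where x: "x \<in> Q" "X = ?R `` {x}" by (auto elim: quotientE)
        have "x \<notin> Ca \<union> Cb"
        proof
          assume "x \<in> Ca \<union> Cb"
          then show False
          proof
            assume "x \<in> Ca" then have "(a,x) \<in> ?R" unfolding Ca_def by simp
            then have "?R `` {x} = Ca" unfolding Ca_def using eqv by (metis equiv_class_eq)
            then show False using x \<open>X \<noteq> Ca\<close> by simp
          next
            assume "x \<in> Cb" then have "(b,x) \<in> ?R" unfolding Cb_def by simp
            then have "?R `` {x} = Cb" unfolding Cb_def using eqv by (metis equiv_class_eq)
            then show False using x \<open>X \<noteq> Cb\<close> by simp
          qed
        qed
        then have "X = ?R' `` {x}" using cls x by simp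
        then show ?thesis using x by (metis quotientI)
      qed
    qed
  qed
  have finq: "finite (Q // ?R)" using fin comp_sub by (rule finite_quotient)
  have CaQ: "Ca \<in> Q // ?R" unfolding Ca_def using True by (auto intro: quotientI)
  have CbQ: "Cb \<in> Q // ?R" unfolding Cb_def using True by (auto intro: quotientI)
  have neq: "Ca \<noteq> Cb"
  proof
    assume "Ca = Cb"
    then have "b \<in> Ca" unfolding Cb_def using eqv True by (meson equiv_class_self)
    then show False using True unfolding Ca_def by simp
  qed
  have notin: "Ca \<union> Cb \<notin> Q // ?R - {Ca, Cb}"
  proof
    assume "Ca \<union> Cb \<in> Q // ?R - {Ca, Cb}"
    then have "Ca \<union> Cb \<in> Q // ?R" by blast
    then obtain x where x: "x \<in> Q" "Ca \<union> Cb = ?R `` {x}" by (rule quotientE)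
    have "a \<in> Ca" unfolding Ca_def using eqv True by (meson equiv_class_self)
    then have "(x,a) \<in> ?R" using x by auto
    then have "?R `` {x} = Ca" unfolding Ca_def using eqv by (metis equiv_class_eq)
    moreover have "b \<in> Cb" unfolding Cb_def using eqv True by (meson equiv_class_self)
    ultimately have "b \<in> Ca" using x by auto
    then show False using True unfolding Ca_def by simp
  qed
  have "card (Q // ?R') = card (Q // ?R - {Ca, Cb}) + 1"
    unfolding quot using notin finq by simp
  moreover have "card (Q // ?R - {Ca, Cb}) + 2 = card (Q // ?R)"
  proof -
    have sub: "{Ca, Cb} \<subseteq> Q // ?R" using CaQ CbQ by simp
    have c2: "card {Ca, Cb} = 2" using neq by simp
    have "card (Q // ?R - {Ca, Cb}) = card (Q // ?R) - card {Ca, Cb}"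
      using sub finq by (meson card_Diff_subset finite_subset)
    moreover have "card {Ca, Cb} \<le> card (Q // ?R)" using sub finq by (rule card_mono[rotated])
    ultimately show ?thesis using c2 by simp
  qed
  ultimately show ?thesis unfolding n_comp_def using True by simp
qed

definition pathE :: "nat \<Rightarrow> nat set set" where
  "pathE k = {{i, Suc i} | i. i < k}"

lemma pathE_0: "pathE 0 = {}" by (simp add: pathE_def)
lemma pathE_Suc: "pathE (Suc k) = insert {k, Suc k} (pathE k)"
  by (auto simp: pathE_def less_Suc_eq)

lemma not_in_pathE: "{k, Suc k} \<notin> pathE k"
  by (auto simp: pathE_def doubleton_eq_iff)

lemma ncomp_empty: "finite Q \<Longrightarrow> n_comp {} Q = card Q"
proof -
  assume fin: "finite Q"
  have "comp_rel {} Q = Id_on Q" by (auto simp: comp_rel_def induced_adj_def)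
  moreover have "Q // Id_on Q = (\<lambda>x. {x}) ` Q" by (auto simp: quotient_def)
  ultimately show ?thesis unfolding n_comp_def by (simp add: card_image)
qed

lemma isolated: "(k, Suc k) \<notin> (induced_adj (pathE k) Q)\<^sup>*"
proof
  assume "(k, Suc k) \<in> (induced_adj (pathE k) Q)\<^sup>*"
  then show False
  proof (cases rule: rtranclE)
    case base then show ?thesis by simp
  next
    case (step y)
    then show ?thesis by (auto simp: induced_adj_def pathE_def doubleton_eq_iff)
  qed
qed

lemma ncomp_path: "finite Q \<Longrightarrow> int (n_comp (pathE k) Q) =
   int (card Q) - int (card {i. i < k \<and> i \<in> Q \<and> Suc i \<in> Q})"
proof (induction k)
  case 0 then show ?case by (simp add: pathE_0 ncomp_empty)
next
  case (Suc k)
  have nc: "(k, Suc k) \<notin> comp_rel (pathE k) Q" using isolated by (auto simp: comp_rel_def)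
  have "{i. i < Suc k \<and> i \<in> Q \<and> Suc i \<in> Q} = {i. i < k \<and> i \<in> Q \<and> Suc i \<in> Q}
      \<union> (if k \<in> Q \<and> Suc k \<in> Q then {k} else {})" by (auto simp: less_Suc_eq)
  then have "int (card {i. i < Suc k \<and> i \<in> Q \<and> Suc i \<in> Q}) = int (card {i. i < k \<and> i \<in> Q \<and> Suc i \<in> Q})
      + (if k \<in> Q \<and> Suc k \<in> Q then 1 else 0)" by auto
  then show ?case using Suc nc by (simp add: pathE_Suc ncomp_insert)
qed

lemma nedges_empty: "n_edges {} Q = 0" by (simp add: n_edges_def)

lemma nedges_insert: "finite Q \<Longrightarrow> int (n_edges (insert e E) Q) = int (n_edges E Q)
   + (if e \<notin> E \<and> e \<subseteq> Q then 1 else 0)"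
proof -
  assume fin: "finite Q"
  have f: "finite {x \<in> E. x \<subseteq> Q}" by (rule finite_subset[of _ "Pow Q"]) (use fin in auto)
  have "{x \<in> insert e E. x \<subseteq> Q} = (if e \<subseteq> Q then insert e {x \<in> E. x \<subseteq> Q} else {x \<in> E. x \<subseteq> Q})"
    by auto
  then show ?thesis unfolding n_edges_def using f by (auto simp: insert_absorb)
qed

lemma nedges_path: "finite Q \<Longrightarrow> int (n_edges (pathE k) Q) =
   int (card {i. i < k \<and> i \<in> Q \<and> Suc i \<in> Q})"
proof (induction k)
  case 0 then show ?case by (simp add: pathE_0 nedges_empty)
next
  case (Suc k)
  have "{i. i < Suc k \<and> i \<in> Q \<and> Suc i \<in> Q} = {i. i < k \<and> i \<in> Q \<and> Suc i \<in> Q}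
      \<union> (if k \<in> Q \<and> Suc k \<in> Q then {k} else {})" by (auto simp: less_Suc_eq)
  then have "int (card {i. i < Suc k \<and> i \<in> Q \<and> Suc i \<in> Q}) = int (card {i. i < k \<and> i \<in> Q \<and> Suc i \<in> Q})
      + (if k \<in> Q \<and> Suc k \<in> Q then 1 else 0)" by auto
  then show ?case using Suc not_in_pathE by (simp add: pathE_Suc nedges_insert)
qed

lemma path_side: "(x,y) \<in> (induced_adj (pathE k) Q)\<^sup>* \<Longrightarrow> z \<notin> Q \<Longrightarrow> (x < z \<longleftrightarrow> y < z)"
proof (induction rule: rtrancl_induct)
  case base then show ?case by simp
next
  case (step y w)
  then obtain i where "{y, w} = {i, Suc i}" "y \<in> Q" "w \<in> Q" by (auto simp: induced_adj_def pathE_def)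
  then have "w = Suc y \<or> y = Suc w" by (auto simp: doubleton_eq_iff)
  moreover have "w \<noteq> z" "y \<noteq> z" using step \<open>y \<in> Q\<close> \<open>w \<in> Q\<close> by auto
  ultimately show ?case using step.IH step.prems by auto
qed

lemma path_conn_int: "x \<le> y \<Longrightarrow> y \<le> k \<Longrightarrow> {x..y} \<subseteq> Q \<Longrightarrow> (x,y) \<in> (induced_adj (pathE k) Q)\<^sup>*"
proof (induction y rule: dec_induct)
  case base then show ?case by simp
next
  case (step n)
  have "(n, Suc n) \<in> induced_adj (pathE k) Q"
    using step by (auto simp: induced_adj_def pathE_def)
  moreover have "{x..n} \<subseteq> Q" using step.prems by auto
  moreover have "n \<le> k" using step.prems by simp
  ultimately show ?case using step.IH by (meson rtrancl_into_rtrancl)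
qed

lemma path_conn: "x \<le> y \<Longrightarrow> y \<le> k \<Longrightarrow> (x,y) \<in> comp_rel (pathE k) Q \<longleftrightarrow> {x..y} \<subseteq> Q"
proof
  assume xy: "x \<le> y" and yk: "y \<le> k" and c: "(x,y) \<in> comp_rel (pathE k) Q"
  show "{x..y} \<subseteq> Q"
  proof
    fix z assume z: "z \<in> {x..y}"
    show "z \<in> Q"
    proof (rule ccontr)
      assume zq: "z \<notin> Q"
      from c have "x \<in> Q" "y \<in> Q" "(x,y) \<in> (induced_adj (pathE k) Q)\<^sup>*" by (auto simp: comp_rel_def)
      with zq z path_side[of x y k Q z] show False by (cases "z = x"; cases "z = y") auto
    qed
  qed
next
  assume "x \<le> y" "y \<le> k" "{x..y} \<subseteq> Q"
  then show "(x,y) \<in> comp_rel (pathE k) Q" using path_conn_int[of x y k Q] by (auto simp: comp_rel_def)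
qed

definition ind :: "'a set \<Rightarrow> 'a set \<Rightarrow> int" where
  "ind S Q = (if S \<subseteq> Q then 1 else 0)"

lemma alt_pow: assumes "finite A" "A \<noteq> {}" shows "(\<Sum>T\<in>Pow A. (-1::int)^card T) = 0"
proof -
  obtain x where x: "x \<in> A" using assms by auto
  define B where "B = A - {x}"
  have A: "A = insert x B" and xB: "x \<notin> B" and fB: "finite B" using x assms by (auto simp: B_def)
  have disj: "Pow B \<inter> insert x ` Pow B = {}" using xB by auto
  have inj: "inj_on (insert x) (Pow B)" using xB unfolding inj_on_def by (metis Pow_iff insert_ident subset_iff)
  have "(\<Sum>T\<in>insert x ` Pow B. (-1::int)^card T) = (\<Sum>T\<in>Pow B. (-1::int)^card (insert x T))"
    using inj by (simp add: sum.reindex)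
  also have "\<dots> = (\<Sum>T\<in>Pow B. - ((-1::int)^card T))"
  proof (rule sum.cong)
    fix T assume "T \<in> Pow B"
    then have "finite T" "x \<notin> T" using fB xB finite_subset by auto
    then show "(-1::int)^card (insert x T) = - ((-1::int)^card T)" by simp
  qed simp
  finally have "(\<Sum>T\<in>insert x ` Pow B. (-1::int)^card T) = - (\<Sum>T\<in>Pow B. (-1::int)^card T)"
    by (simp add: sum_negf)
  moreover have "(\<Sum>T\<in>Pow A. (-1::int)^card T) = (\<Sum>T\<in>Pow B. (-1::int)^card T) + (\<Sum>T\<in>insert x ` Pow B. (-1::int)^card T)"
    unfolding A Pow_insert using disj fB by (simp add: sum.union_disjoint)
  ultimately show ?thesis by simp
qed

lemma alt_sup:
  assumes fV: "finite V" and SV: "S \<subseteq> V" and Sne: "S \<noteq> {}" and SnV: "S \<noteq> V"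
  shows "(\<Sum>Q\<in>Pow V - {{}}. (-1::int)^(card Q - 1) * ind S Q) = 0"
proof -
  have fin: "finite (Pow V - {{}})" using fV by simp
  have "(\<Sum>Q\<in>Pow V - {{}}. (-1::int)^(card Q - 1) * ind S Q)
      = (\<Sum>Q\<in>Pow V - {{}}. if S \<subseteq> Q then (-1::int)^(card Q - 1) else 0)"
    by (rule sum.cong) (auto simp: ind_def)
  also have "\<dots> = (\<Sum>Q\<in>{Q \<in> Pow V - {{}}. S \<subseteq> Q}. (-1::int)^(card Q - 1))"
    using sum.inter_filter[OF fin, of "\<lambda>Q. (-1::int)^(card Q - 1)" "\<lambda>Q. S \<subseteq> Q"] by simp
  also have "{Q \<in> Pow V - {{}}. S \<subseteq> Q} = (\<lambda>T. S \<union> T) ` Pow (V - S)"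
  proof
    show "{Q \<in> Pow V - {{}}. S \<subseteq> Q} \<subseteq> (\<lambda>T. S \<union> T) ` Pow (V - S)"
    proof
      fix Q assume "Q \<in> {Q \<in> Pow V - {{}}. S \<subseteq> Q}"
      then have "Q = S \<union> (Q - S)" "Q - S \<in> Pow (V - S)" by auto
      then show "Q \<in> (\<lambda>T. S \<union> T) ` Pow (V - S)" by blast
    qed
  qed (use SV Sne in auto)
  also have "(\<Sum>Q\<in>(\<lambda>T. S \<union> T) ` Pow (V - S). (-1::int)^(card Q - 1))
     = (\<Sum>T\<in>Pow (V - S). (-1::int)^(card (S \<union> T) - 1))"
  proof (rule sum.reindex[unfolded comp_def])
    show "inj_on (\<lambda>T. S \<union> T) (Pow (V - S))" unfolding inj_on_def by auto
  qed
  also have "\<dots> = (\<Sum>T\<in>Pow (V - S). (-1::int)^(card S - 1) * (-1::int)^card T)"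
  proof (rule sum.cong)
    fix T assume T: "T \<in> Pow (V - S)"
    have fS: "finite S" using fV SV finite_subset by auto
    have fT: "finite T" using T fV finite_subset by auto
    have "card (S \<union> T) = card S + card T" using T fS fT by (auto intro: card_Un_disjoint)
    moreover have "card S \<ge> 1" using fS Sne by (simp add: Suc_leI card_gt_0_iff)
    ultimately have "card (S \<union> T) - 1 = (card S - 1) + card T" by simp
    then show "(-1::int)^(card (S \<union> T) - 1) = (-1::int)^(card S - 1) * (-1::int)^card T"
      by (simp add: power_add)
  qed simp
  also have "\<dots> = (-1::int)^(card S - 1) * (\<Sum>T\<in>Pow (V - S). (-1::int)^card T)"
    by (simp add: sum_distrib_left)
  also have "(\<Sum>T\<in>Pow (V - S). (-1::int)^card T) = 0"
    using fV SV SnV by (intro alt_pow) auto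
  finally show ?thesis by simp
qed

lemma comp_sym: "(x,y) \<in> comp_rel E Q \<longleftrightarrow> (y,x) \<in> comp_rel E Q"
  using comp_equiv[of Q E] by (meson equiv_def symD)

lemma card_ind: "finite Q \<Longrightarrow> Q \<subseteq> {..<(N::nat)} \<Longrightarrow> int (card Q) = (\<Sum>i<N. ind {i} Q)"
proof -
  assume "finite Q" "Q \<subseteq> {..<N}"
  have "(\<Sum>i<N. ind {i} Q) = (\<Sum>i<N. if i \<in> Q then 1 else 0)" by (simp add: ind_def)
  also have "\<dots> = (\<Sum>i\<in>{i\<in>{..<N}. i \<in> Q}. 1)"
    using sum.inter_filter[OF finite_lessThan[of N], of "\<lambda>_. 1::int" "\<lambda>i. i \<in> Q"] by simp
  also have "{i\<in>{..<N}. i \<in> Q} = Q" using \<open>Q \<subseteq> {..<N}\<close> by auto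
  finally show ?thesis by simp
qed

lemma card_ind2: "int (card {i. i < k \<and> i \<in> Q \<and> Suc i \<in> Q}) = (\<Sum>i<k. ind {i, Suc i} Q)"
proof -
  have "(\<Sum>i<k. ind {i, Suc i} Q) = (\<Sum>i<k. if i \<in> Q \<and> Suc i \<in> Q then 1 else 0)" by (simp add: ind_def)
  also have "\<dots> = (\<Sum>i\<in>{i\<in>{..<k}. i \<in> Q \<and> Suc i \<in> Q}. 1)"
    using sum.inter_filter[of "{..<k}" "\<lambda>_. 1::int" "\<lambda>i. i \<in> Q \<and> Suc i \<in> Q"] by simp
  also have "{i\<in>{..<k}. i \<in> Q \<and> Suc i \<in> Q} = {i. i < k \<and> i \<in> Q \<and> Suc i \<in> Q}" by auto
  finally show ?thesis by simp
qed

lemma J_formula: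
  fixes k n m :: nat
  assumes nm: "n < m" "m \<le> k" and fin: "finite Q" and Qs: "Q \<subseteq> {0..k}"
    and e1: "{0, k} \<notin> pathE k" and e2: "{n, m} \<notin> insert {0, k} (pathE k)"
  shows "Jb (insert {n, m} (insert {0, k} (pathE k))) Q =
     (\<Sum>i<Suc k. ind {i} Q) - (\<Sum>i<k. ind {i, Suc i} Q) - ind {0, k} Q - ind {n, m} Q
     + 2 * ind {n..m} Q + 2 * ind ({0..n} \<union> {m..k}) Q"
proof -
  let ?P = "pathE k"
  let ?C = "insert {0, k} ?P"
  let ?G = "insert {n, m} ?C"
  let ?R = "comp_rel ?P Q"
  have "Q \<subseteq> {..<Suc k}" using Qs by auto
  then have cQ: "int (card Q) = (\<Sum>i<Suc k. ind {i} Q)" using card_ind[OF fin] by blast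
  have eP: "int (n_edges ?P Q) = (\<Sum>i<k. ind {i, Suc i} Q)" using nedges_path[OF fin] card_ind2 by simp
  have cP: "int (n_comp ?P Q) = int (card Q) - (\<Sum>i<k. ind {i, Suc i} Q)"
    using ncomp_path[OF fin] card_ind2 by simp
  have eG: "int (n_edges ?G Q) = int (n_edges ?P Q) + ind {0, k} Q + ind {n, m} Q"
    using nedges_insert[OF fin] e1 e2 by (simp add: ind_def)
  have r0k: "(0, k) \<in> ?R \<longleftrightarrow> {0..k} \<subseteq> Q" by (rule path_conn) auto
  have cC: "int (n_comp ?C Q) = int (n_comp ?P Q) - (ind {0, k} Q - ind {0..k} Q)"
    using ncomp_insert[OF fin, of 0 k ?P] r0k by (auto simp: ind_def)
  have rnm: "(n, m) \<in> ?R \<longleftrightarrow> {n..m} \<subseteq> Q" by (rule path_conn) (use nm in auto)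
  have rn0: "(n, 0) \<in> ?R \<longleftrightarrow> {0..n} \<subseteq> Q" using comp_sym[of n 0] path_conn[of 0 n k] nm by auto
  have rkm: "(k, m) \<in> ?R \<longleftrightarrow> {m..k} \<subseteq> Q" using comp_sym[of k m] path_conn[of m k k] nm by auto
  have rnk: "(n, k) \<in> ?R \<longleftrightarrow> {n..k} \<subseteq> Q" using path_conn[of n k k] nm by auto
  have r0m: "(0, m) \<in> ?R \<longleftrightarrow> {0..m} \<subseteq> Q" using path_conn[of 0 m k] nm by auto
  have rC: "(n, m) \<in> comp_rel ?C Q \<longleftrightarrow> {n..m} \<subseteq> Q \<or> {0..n} \<union> {m..k} \<subseteq> Q"
  proof (cases "0 \<in> Q \<and> k \<in> Q")
    case True
    then have "(n, m) \<in> comp_rel ?C Q \<longleftrightarrow> (n,m) \<in> ?R \<or> (n,0) \<in> ?R \<and> (k,m) \<in> ?R \<or> (n,k) \<in> ?R \<and> (0,m) \<in> ?R"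
      by (subst comp_insert) auto
    also have "\<dots> \<longleftrightarrow> {n..m} \<subseteq> Q \<or> {0..n} \<subseteq> Q \<and> {m..k} \<subseteq> Q \<or> {n..k} \<subseteq> Q \<and> {0..m} \<subseteq> Q"
      using rnm rn0 rkm rnk r0m by simp
    also have "\<dots> \<longleftrightarrow> {n..m} \<subseteq> Q \<or> {0..n} \<union> {m..k} \<subseteq> Q"
      using nm by auto
    finally show ?thesis .
  next
    case False
    then have "(n, m) \<in> comp_rel ?C Q \<longleftrightarrow> (n,m) \<in> ?R" by (subst comp_insert) auto
    moreover have "\<not> {0..n} \<union> {m..k} \<subseteq> Q" using False nm by auto
    ultimately show ?thesis using rnm by blast
  qed
  have un: "{n..m} \<union> ({0..n} \<union> {m..k}) = {0..k}" using nm by auto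
  have disj: "(if {n..m} \<subseteq> Q \<or> {0..n} \<union> {m..k} \<subseteq> Q then 1 else 0)
      = ind {n..m} Q + ind ({0..n} \<union> {m..k}) Q - ind {0..k} Q"
    unfolding ind_def using un by auto
  have nmQ: "{n..m} \<subseteq> Q \<or> {0..n} \<union> {m..k} \<subseteq> Q \<Longrightarrow> n \<in> Q \<and> m \<in> Q" using nm by auto
  have cG: "int (n_comp ?G Q) = int (n_comp ?C Q) - (ind {n, m} Q - ind {n..m} Q - ind ({0..n} \<union> {m..k}) Q + ind {0..k} Q)"
    using ncomp_insert[OF fin, of n m ?C] rC disj nmQ by (auto simp: ind_def split: if_splits)
  show ?thesis unfolding Jb_def betti1_def using cQ eP cP eG cC cG by simp
qed

lemma cycle_eq: "N \<ge> 2 \<Longrightarrow> cycle_edges N = insert {0, N - 1} (pathE (N - 1))"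
proof -
  assume N: "N \<ge> 2"
  show ?thesis
  proof
    show "cycle_edges N \<subseteq> insert {0, N - 1} (pathE (N - 1))"
    proof
      fix e assume "e \<in> cycle_edges N"
      then obtain i where i: "i < N" "e = {i, (i + 1) mod N}" by (auto simp: cycle_edges_def)
      show "e \<in> insert {0, N - 1} (pathE (N - 1))"
      proof (cases "i = N - 1")
        case True then have "(i + 1) mod N = 0" using N by simp
        then show ?thesis using i True by auto
      next
        case False then have "(i+1) mod N = Suc i" "i < N - 1" using i by auto
        then show ?thesis using i unfolding pathE_def by auto
      qed
    qed
  next
    show "insert {0, N - 1} (pathE (N - 1)) \<subseteq> cycle_edges N"
    proof
      fix e assume "e \<in> insert {0, N - 1} (pathE (N - 1))"
      then consider "e = {0, N - 1}" | i where "i < N - 1" "e = {i, Suc i}" unfolding pathE_def by auto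
      then show "e \<in> cycle_edges N"
      proof cases
        case 1
        have "(N - 1 + 1) mod N = 0" using N by simp
        then have "e = {N - 1, (N - 1 + 1) mod N}" using 1 by auto
        then show ?thesis unfolding cycle_edges_def using N by force
      next
        case 2
        then have "(i + 1) mod N = Suc i" by simp
        then show ?thesis unfolding cycle_edges_def using 2 by force
      qed
    qed
  qed
qed

lemma main_ordered:
  fixes k n m :: nat
  assumes k: "k \<ge> 3" and nm: "n < m" "m \<le> k" and adj1: "m \<noteq> Suc n" and adj2: "\<not> (n = 0 \<and> m = k)"
    and e2: "{n, m} \<notin> insert {0, k} (pathE k)"
  shows "CN (insert {n, m} (insert {0, k} (pathE k))) {0..<Suc k} = 0"
proof -
  let ?G = "insert {n, m} (insert {0, k} (pathE k))"
  let ?V = "{0..<Suc k}"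
  let ?f = "\<lambda>Q::nat set. (-1::int)^(card Q - 1)"
  let ?A = "{n..m}"
  let ?B = "{0..n} \<union> {m..k}"
  have fV: "finite ?V" by simp
  have cV: "card ?V = Suc k" by simp
  have e1: "{0, k} \<notin> pathE k" using k by (auto simp: pathE_def doubleton_eq_iff)
  have small: "S \<noteq> ?V" if "card S \<le> 2" for S :: "nat set"
    using that k cV by auto
  have z: "(\<Sum>Q\<in>Pow ?V - {{}}. ?f Q * ind S Q) = 0" if "S \<subseteq> ?V" "S \<noteq> {}" "S \<noteq> ?V" for S
    using alt_sup[OF fV that] .
  have z1: "(\<Sum>Q\<in>Pow ?V - {{}}. ?f Q * (\<Sum>i<Suc k. ind {i} Q)) = 0"
  proof -
    have "(\<Sum>Q\<in>Pow ?V - {{}}. ?f Q * (\<Sum>i<Suc k. ind {i} Q)) = (\<Sum>Q\<in>Pow ?V - {{}}. \<Sum>i<Suc k. ?f Q * ind {i} Q)"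
      by (simp only: sum_distrib_left)
    also have "\<dots> = (\<Sum>i<Suc k. \<Sum>Q\<in>Pow ?V - {{}}. ?f Q * ind {i} Q)"
      by (rule sum.swap)
    also have "\<dots> = 0"
    proof (rule sum.neutral, rule ballI)
      fix i assume "i \<in> {..<Suc k}"
      then show "(\<Sum>Q\<in>Pow ?V - {{}}. ?f Q * ind {i} Q) = 0" by (intro z small) auto
    qed
    finally show ?thesis .
  qed
  have z2: "(\<Sum>Q\<in>Pow ?V - {{}}. ?f Q * (\<Sum>i<k. ind {i, Suc i} Q)) = 0"
  proof -
    have "(\<Sum>Q\<in>Pow ?V - {{}}. ?f Q * (\<Sum>i<k. ind {i, Suc i} Q)) = (\<Sum>Q\<in>Pow ?V - {{}}. \<Sum>i<k. ?f Q * ind {i, Suc i} Q)"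
      by (simp only: sum_distrib_left)
    also have "\<dots> = (\<Sum>i<k. \<Sum>Q\<in>Pow ?V - {{}}. ?f Q * ind {i, Suc i} Q)"
      by (rule sum.swap)
    also have "\<dots> = 0"
    proof (rule sum.neutral, rule ballI)
      fix i assume "i \<in> {..<k}"
      moreover have "card {i, Suc i} \<le> 2" by (simp add: card_insert_le_m1)
      ultimately show "(\<Sum>Q\<in>Pow ?V - {{}}. ?f Q * ind {i, Suc i} Q) = 0" by (intro z small) auto
    qed
    finally show ?thesis .
  qed
  have z3: "(\<Sum>Q\<in>Pow ?V - {{}}. ?f Q * ind {0, k} Q) = 0"
    by (intro z small) (auto simp: card_insert_le_m1)
  have z4: "(\<Sum>Q\<in>Pow ?V - {{}}. ?f Q * ind {n, m} Q) = 0"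
    using nm by (intro z small) (auto simp: card_insert_le_m1)
  have z5: "(\<Sum>Q\<in>Pow ?V - {{}}. ?f Q * ind ?A Q) = 0"
  proof (rule z)
    show "?A \<noteq> ?V"
    proof (cases "n = 0")
      case True then have "m < k" using adj2 nm by auto
      then have "k \<notin> ?A" by auto
      then show ?thesis by auto
    next
      case False then have "0 \<notin> ?A" by auto
      moreover have "0 \<in> ?V" by simp
      ultimately show ?thesis by blast
    qed
  qed (use nm in auto)
  have z6: "(\<Sum>Q\<in>Pow ?V - {{}}. ?f Q * ind ?B Q) = 0"
  proof (rule z)
    have "Suc n \<notin> ?B" using nm adj1 by auto
    moreover have "Suc n \<in> ?V" using nm by auto
    ultimately show "?B \<noteq> ?V" by blast
  qed (use nm in auto)
  have "CN ?G ?V = (\<Sum>Q\<in>Pow ?V - {{}}. ?f Q * ((\<Sum>i<Suc k. ind {i} Q) - (\<Sum>i<k. ind {i, Suc i} Q) - ind {0, k} Q - ind {n, m} Q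
     + 2 * ind ?A Q + 2 * ind ?B Q))"
    unfolding CN_def
  proof (rule sum.cong)
    fix Q assume Q: "Q \<in> Pow ?V - {{}}"
    then have "finite Q" "Q \<subseteq> {0..k}" using finite_subset by auto
    then show "?f Q * Jb ?G Q = ?f Q * ((\<Sum>i<Suc k. ind {i} Q) - (\<Sum>i<k. ind {i, Suc i} Q) - ind {0, k} Q - ind {n, m} Q
     + 2 * ind ?A Q + 2 * ind ?B Q)"
      using J_formula[OF nm _ _ e1 e2] by simp
  qed simp
  also have "\<dots> = (\<Sum>Q\<in>Pow ?V - {{}}. ?f Q * (\<Sum>i<Suc k. ind {i} Q) - ?f Q * (\<Sum>i<k. ind {i, Suc i} Q)
      - ?f Q * ind {0, k} Q - ?f Q * ind {n, m} Q + 2 * (?f Q * ind ?A Q) + 2 * (?f Q * ind ?B Q))"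
    by (rule sum.cong) (simp_all add: algebra_simps)
  also have "\<dots> = 0"
    by (simp only: sum.distrib sum_subtractf sum_distrib_left[symmetric] z1 z2 z3 z4 z5 z6)
  finally show ?thesis .
qed

theorem mainTheorem9:
  fixes N n m :: nat
  assumes "N \<ge> 4" and "n < N" and "m < N" and "n \<noteq> m"
    and "{n, m} \<notin> cycle_edges N"
  shows "CN (insert {n, m} (cycle_edges N)) {0..<N} = 0"
proof -
  define k where "k = N - 1"
  have N: "N = Suc k" and k: "k \<ge> 3" using assms(1) by (auto simp: k_def)
  have ce: "cycle_edges N = insert {0, k} (pathE k)" using cycle_eq[of N] assms(1) by (simp add: k_def)
  define a where "a = min n m"
  define b where "b = max n m"
  have ab: "{n, m} = {a, b}" by (auto simp: a_def b_def min_def max_def)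
  have ablt: "a < b" "b \<le> k" using assms(2-4) by (auto simp: a_def b_def k_def)
  have nadj: "{a, b} \<notin> insert {0, k} (pathE k)" using assms(5) ce ab by simp
  have adj1: "b \<noteq> Suc a"
  proof
    assume "b = Suc a"
    then have "{a, b} \<in> pathE k" using ablt unfolding pathE_def by auto
    then show False using nadj by simp
  qed
  have adj2: "\<not> (a = 0 \<and> b = k)" using nadj by auto
  have "CN (insert {a, b} (insert {0, k} (pathE k))) {0..<Suc k} = 0"
    by (rule main_ordered[OF k ablt adj1 adj2 nadj])
  then show ?thesis using ce ab N by simp
qed

end
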